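(* Let $\mathbb S^1=\{z\in\mathbb C:|z|=1\}$, let $f(z)=z^2$, let $\rho(z)=e^{i\alpha}z$ with $\alpha/2\pi$ irrational, and let $g=\rho\circ f$. Then the IFS $F=\{f,g\}$ on $\mathbb S^1$ has attractor $\mathbb S^1$ (with basin $\mathbb S^1$): $F(\mathbb S^1)=\mathbb S^1$ and $F^{(n)}(K)\to\mathbb S^1$ in the Hausdorff metric for every nonempty compact $K\subseteq\mathbb S^1$. Nevertheless, for every metric $d$ on $\mathbb S^1$ inducing the standard topology, $\mathrm{Lip}(f,d)>1$ and $\mathrm{Lip}(g,d)>1$.
   Context: For a finite IFS $F$ (finite set of continuous self-maps of a metric space $\mathbb X$) and a nonempty compact $K$, $F(K)=\bigcup_{f\in F}f(K)$ and $F^{(n)}$ is its $n$-fold composition. A compact set $A$ is the attractor of $F$ if there is an open $U\supseteq A$ with $F(A)=A$ and $F^{(n)}(K)\to A$ in the Hausdorff metric for every nonempty compact $K\subseteq U$; the largest such $U$ is the basin. $\mathrm{Lip}(f,d)=\sup_{x\neq y} d(f(x),f(y))/d(x,y)$. *)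

theory Defs
  imports "HOL-Analysis.Analysis"
begin

definition ifs_image :: "('a \<Rightarrow> 'a) set \<Rightarrow> 'a set \<Rightarrow> 'a set" where
  "ifs_image F K = (\<Union>f\<in>F. f ` K)"

definition hausdorff_dist :: "'a::metric_space set \<Rightarrow> 'a set \<Rightarrow> real" where
  "hausdorff_dist A B = max (SUP a\<in>A. infdist a B) (SUP b\<in>B. infdist b A)"

definition lip_const :: "'a set \<Rightarrow> ('a \<Rightarrow> 'a \<Rightarrow> real) \<Rightarrow> ('a \<Rightarrow> 'a) \<Rightarrow> ereal" where
  "lip_const S d f = (SUP p\<in>{(x,y). x \<in> S \<and> y \<in> S \<and> x \<noteq> y}.
       ereal (d (f (fst p)) (f (snd p)) / d (fst p) (snd p)))"

end

theory Submission imports Defs begin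

lemma exp_2pi_int: "exp (\<i> * complex_of_real (2 * pi * real_of_int h)) = 1"
  by (metis exp_2pi_1_int mult_of_int_commute of_int_numeral of_real_mult of_real_of_int_eq)

lemma dense_rot:
  fixes \<alpha> :: real
  assumes irr: "\<alpha> / (2 * pi) \<notin> \<rat>" and b: "b \<in> sphere (0::complex) 1" and e: "e > 0"
  shows "\<exists>k::nat. dist b (exp (\<i> * complex_of_real \<alpha>) ^ k) < e"
proof -
  have beq: "exp (\<i> * complex_of_real (Arg b)) = b" using b complex_norm_eq_1_exp_eq by auto
  have "isCont (\<lambda>t. exp (\<i> * complex_of_real t)) (Arg b)"
    by (intro continuous_intros)
  then obtain \<delta> where \<delta>: "\<delta> > 0" "\<And>t. dist t (Arg b) < \<delta> \<Longrightarrow> dist (exp (\<i> * complex_of_real t)) (exp (\<i> * complex_of_real (Arg b))) < e"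
    using e unfolding continuous_at_eps_delta by blast
  obtain h k where hk: "k > 0" "\<bar>of_int k * (\<alpha> / (2*pi)) - of_int h - Arg b / (2*pi)\<bar> < \<delta> / (2*pi)"
  proof -
    have "\<delta>/(2*pi) > 0" using \<delta>(1) by simp
    from sequence_of_fractional_parts_is_dense[OF irr this, of "Arg b / (2*pi)"] that show ?thesis by blast
  qed
  have "\<bar>of_int k * \<alpha> - 2*pi* of_int h - Arg b\<bar> = 2*pi*\<bar>of_int k * (\<alpha> / (2*pi)) - of_int h - Arg b / (2*pi)\<bar>"
  proof -
    have "of_int k * \<alpha> - 2*pi * of_int h - Arg b = (2*pi) * (of_int k * (\<alpha> / (2*pi)) - of_int h - Arg b / (2*pi))"
      by (simp add: field_simps)
    then show ?thesis by (simp add: abs_mult)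
  qed
  also have "\<dots> < \<delta>" using hk(2) pi_gt_zero by (simp add: field_simps)
  finally have "dist (of_int k * \<alpha> - 2*pi* of_int h) (Arg b) < \<delta>" by (simp add: dist_real_def)
  from \<delta>(2)[OF this] beq
  have *: "dist (exp (\<i> * complex_of_real (of_int k * \<alpha> - 2*pi* of_int h))) b < e" by simp
  have "exp (\<i> * complex_of_real (of_int k * \<alpha> - 2*pi* of_int h)) = exp (\<i> * complex_of_real \<alpha>) ^ nat k"
  proof -
    have "exp (\<i> * complex_of_real (of_int k * \<alpha> - 2*pi* of_int h)) = exp (of_nat (nat k) * (\<i> * complex_of_real \<alpha>)) / exp (\<i> * complex_of_real (2*pi* of_int h))"
      using hk(1) by (simp add: exp_diff algebra_simps)
    also have "exp (\<i> * complex_of_real (2*pi* of_int h)) = 1"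
      by (metis exp_2pi_1_int mult_of_int_commute of_int_numeral of_real_mult of_real_of_int_eq)
    finally show ?thesis by (simp add: exp_of_nat_mult)
  qed
  with * show ?thesis by (metis dist_commute)
qed

lemma finite_dense:
  fixes \<alpha> :: real
  assumes irr: "\<alpha> / (2 * pi) \<notin> \<rat>" and e: "e > 0"
  shows "\<exists>N. \<forall>b\<in>sphere (0::complex) 1. \<exists>m<N. dist b (exp (\<i> * complex_of_real \<alpha>) ^ m) < e"
proof -
  let ?c = "exp (\<i> * complex_of_real \<alpha>)"
  have cover: "sphere (0::complex) 1 \<subseteq> \<Union> ((\<lambda>m. ball (?c ^ m) e) ` UNIV)"
    using dense_rot[OF irr _ e] by (auto simp: dist_commute)
  have op: "\<And>m. m \<in> UNIV \<Longrightarrow> open (ball (?c^m) e)" by simp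
  obtain D where D: "finite D" "sphere (0::complex) 1 \<subseteq> \<Union> ((\<lambda>m. ball (?c ^ m) e) ` D)"
    by (rule compactE_image[OF compact_sphere op cover]) (auto intro: that)
  show ?thesis
  proof (rule exI[of _ "Suc (Max D)"], intro ballI)
    fix b :: complex assume "b \<in> sphere 0 1"
    with D obtain m where "m \<in> D" "dist (?c ^ m) b < e" by auto
    moreover have "m < Suc (Max D)" using D(1) \<open>m \<in> D\<close> by (simp add: le_imp_less_Suc)
    ultimately show "\<exists>m<Suc (Max D). dist b (?c ^ m) < e" by (auto simp: dist_commute)
  qed
qed

lemma iter_props:
  fixes c :: complex
  assumes c: "norm c = 1" and K: "K \<subseteq> sphere 0 1"
  shows "(ifs_image {(\<lambda>z. z ^ 2), (\<lambda>z. c * z ^ 2)} ^^ n) K \<subseteq> sphere 0 1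
     \<and> (\<forall>z\<in>K. \<forall>m<2^n. z ^ (2^n) * c ^ m \<in> (ifs_image {(\<lambda>z. z ^ 2), (\<lambda>z. c * z ^ 2)} ^^ n) K)"
proof (induction n)
  case 0
  then show ?case using K by auto
next
  case (Suc n)
  let ?F = "ifs_image {(\<lambda>z. z ^ 2), (\<lambda>z. c * z ^ 2)}"
  have fs: "(?F ^^ Suc n) K = ?F ((?F ^^ n) K)" by simp
  have 0: "?F A \<subseteq> sphere 0 1" if "A \<subseteq> sphere 0 1" for A
    using that c by (auto simp: ifs_image_def norm_mult norm_power)
  have 1: "?F ((?F ^^ n) K) \<subseteq> sphere 0 1"
    using Suc.IH by (intro 0) blast
  have 2: "z ^ (2 ^ Suc n) * c ^ m \<in> ?F ((?F ^^ n) K)" if z: "z \<in> K" and m: "m < 2 ^ Suc n" for z m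
  proof -
    obtain q r where qr: "m = 2 * q + r" "r < 2" by (metis div_mult_mod_eq mod_less_divisor mult.commute zero_less_numeral)
    have q: "q < 2 ^ n" using m qr by auto
    let ?u = "z ^ (2^n) * c ^ q"
    have u: "?u \<in> (?F ^^ n) K" using Suc.IH z q by blast
    have sq: "?u ^ 2 = z ^ (2 ^ Suc n) * c ^ (2*q)"
      by (simp add: power_mult_distrib power_mult[symmetric] mult.commute)
    show ?thesis
    proof (cases "r = 0")
      case True
      then have "z ^ (2 ^ Suc n) * c ^ m = (\<lambda>z. z ^ 2) ?u" using qr sq by simp
      then show ?thesis using u unfolding ifs_image_def by blast
    next
      case False
      then have "r = 1" using qr by simp
      then have "z ^ (2 ^ Suc n) * c ^ m = (\<lambda>z. c * z ^ 2) ?u" using qr sq by (simp add: algebra_simps)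
      then show ?thesis using u unfolding ifs_image_def by blast
    qed
  qed
  show ?case using 1 2 fs by auto
qed


lemma lip_gt:
  fixes c :: complex and d :: "complex \<Rightarrow> complex \<Rightarrow> real"
  assumes c: "norm c = 1" and M: "Metric_space (sphere 0 1) d"
    and top: "Metric_space.mtopology (sphere 0 1) d = top_of_set (sphere (0::complex) 1)"
  shows "lip_const (sphere 0 1) d (\<lambda>z. c * z^2) > 1"
proof (rule ccontr)
  let ?S = "sphere (0::complex) 1"
  let ?\<phi> = "\<lambda>z::complex. c * z^2"
  assume "\<not> lip_const ?S d ?\<phi> > 1"
  hence L: "lip_const ?S d ?\<phi> \<le> 1" by simp
  have nonexp: "d (?\<phi> x) (?\<phi> y) \<le> d x y" if xy: "x\<in>?S" "y\<in>?S" for x y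
  proof (cases "x = y")
    case True then show ?thesis using Metric_space.mdist_zero[OF M] xy c by (simp add: norm_mult norm_power)
  next
    case False
    have mem: "(x,y) \<in> {(x, y). x \<in> ?S \<and> y \<in> ?S \<and> x \<noteq> y}" using xy False by simp
    have "ereal (d (?\<phi> x) (?\<phi> y) / d x y) \<le> lip_const ?S d ?\<phi>"
      unfolding lip_const_def
      using SUP_upper[OF mem, of "\<lambda>p. ereal (d (?\<phi> (fst p)) (?\<phi> (snd p)) / d (fst p) (snd p))"] by simp
    hence "ereal (d (?\<phi> x) (?\<phi> y) / d x y) \<le> 1" using L by (rule order_trans)
    hence "d (?\<phi> x) (?\<phi> y) / d x y \<le> 1" by simp
    moreover have "d x y > 0" using Metric_space.zero[OF M xy] Metric_space.nonneg[OF M, of x y] False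
      by linarith
    ultimately show ?thesis by (simp add: divide_le_eq)
  qed
  define p where "p = cnj c"
  have pn: "norm p = 1" using c by (simp add: p_def)
  have cp: "c * p = 1"
  proof -
    have "c * p = complex_of_real ((cmod c)^2)" by (simp add: p_def complex_norm_square[symmetric])
    then show ?thesis using c by simp
  qed
  have pS: "p \<in> ?S" using pn by simp
  have phip: "?\<phi> (p * w) = p * w^2" for w
  proof -
    have "c * (p*w)^2 = (c*p) * (p * w^2)" by (simp add: algebra_simps power2_eq_square)
    then show ?thesis using cp by simp
  qed
  define w where "w k = exp (\<i> * complex_of_real (pi / 2^k))" for k :: nat
  have w0: "w 0 = -1" by (simp add: w_def)
  have wn: "norm (w k) = 1" for k by (simp add: w_def)
  have wsq: "w (Suc k) ^ 2 = w k" for k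
  proof -
    have "w (Suc k) ^ 2 = exp (of_nat 2 * (\<i> * complex_of_real (pi / 2^Suc k)))"
      unfolding w_def by (rule exp_of_nat_mult[symmetric])
    also have "of_nat 2 * (\<i> * complex_of_real (pi / 2^Suc k)) = \<i> * complex_of_real (pi / 2^k)"
      by simp
    finally show ?thesis by (simp add: w_def)
  qed
  have pwS: "p * w k \<in> ?S" for k using pn wn by (simp add: norm_mult)
  have chain: "d p (-p) \<le> d p (p * w k)" for k
  proof (induction k)
    case 0 then show ?case using w0 by simp
  next
    case (Suc k)
    have "d p (p * w k) = d (?\<phi> (p * 1)) (?\<phi> (p * w (Suc k)))"
      using phip[of 1] phip[of "w (Suc k)"] wsq by simp
    also have "\<dots> \<le> d p (p * w (Suc k))" using nonexp[OF _ pwS, of "p*1"] pS by simp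
    finally show ?case using Suc.IH by simp
  qed
  have pm: "p \<noteq> -p" proof
    assume "p = -p"
    then have "2 * p = 0" by simp
    then show False using pn by simp
  qed
  have mS: "-p \<in> ?S" using pn by simp
  define r where "r = d p (-p)"
  have r: "r > 0" unfolding r_def using Metric_space.zero[OF M pS mS] Metric_space.nonneg[OF M, of p "-p"] pm
    by linarith
  have "openin (top_of_set ?S) (Metric_space.mball ?S d p r)"
    using Metric_space.openin_mball[OF M] top by metis
  then obtain U where U: "open U" "Metric_space.mball ?S d p r = U \<inter> ?S" by (auto simp: openin_open)
  have "p \<in> Metric_space.mball ?S d p r" using Metric_space.in_mball[OF M] pS r Metric_space.mdist_zero[OF M pS] by simp
  then have "p \<in> U" using U by auto
  then obtain \<delta> where \<delta>: "\<delta> > 0" "ball p \<delta> \<subseteq> U" using U(1) open_contains_ball by blast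
  have "(\<lambda>k. pi * (1/2)^k) \<longlonglongrightarrow> 0"
    by (intro tendsto_mult_right_zero LIMSEQ_power_zero) simp
  then have "(\<lambda>k. exp (\<i> * complex_of_real (pi * (1/2)^k))) \<longlonglongrightarrow> exp (\<i> * complex_of_real 0)"
    by (intro tendsto_intros)
  then have "w \<longlonglongrightarrow> 1" unfolding w_def by (simp add: power_one_over field_simps)
  then obtain k where k: "dist (w k) 1 < \<delta>" using \<delta>(1) unfolding lim_sequentially by blast
  have "dist p (p * w k) = dist (w k) 1"
  proof -
    have "dist p (p * w k) = norm (p * (w k - 1))" by (simp add: dist_norm algebra_simps norm_minus_commute)
    also have "\<dots> = dist (w k) 1" using pn by (simp add: norm_mult dist_norm)
    finally show ?thesis .
  qed
  with k \<delta> have "p * w k \<in> U" by (auto simp: dist_commute)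
  with U pwS have "p * w k \<in> Metric_space.mball ?S d p r" by auto
  then have "d p (p * w k) < r" using Metric_space.in_mball[OF M] by simp
  with chain[of k] show False unfolding r_def by simp
qed


theorem mainTheorem2:
  fixes \<alpha> :: real and f g :: "complex \<Rightarrow> complex"
  assumes irr: "\<alpha> / (2 * pi) \<notin> \<rat>"
    and f_def: "f = (\<lambda>z. z ^ 2)"
    and g_def: "g = (\<lambda>z. exp (\<i> * complex_of_real \<alpha>) * f z)"
  shows "ifs_image {f, g} (sphere 0 1) = sphere 0 1
    \<and> (\<forall>K. K \<noteq> {} \<and> compact K \<and> K \<subseteq> sphere 0 1 \<longrightarrow>
          (\<lambda>n. hausdorff_dist ((ifs_image {f, g} ^^ n) K) (sphere 0 1)) \<longlonglongrightarrow> 0)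
    \<and> (\<forall>d. Metric_space (sphere 0 1) d
          \<and> Metric_space.mtopology (sphere 0 1) d = top_of_set (sphere (0::complex) 1)
          \<longrightarrow> lip_const (sphere 0 1) d f > 1 \<and> lip_const (sphere 0 1) d g > 1)"
proof -
  define c where "c = exp (\<i> * complex_of_real \<alpha>)"
  have cn: "norm c = 1" by (simp add: c_def)
  have fg: "f = (\<lambda>z. z^2)" "g = (\<lambda>z. c * z^2)" by (simp_all add: f_def g_def c_def)
  let ?S = "sphere (0::complex) 1"
  let ?F = "ifs_image {(\<lambda>z::complex. z ^ 2), (\<lambda>z. c * z ^ 2)}"
  have P1: "?F ?S = ?S"
  proof
    show "?F ?S \<subseteq> ?S" using cn by (auto simp: ifs_image_def norm_mult norm_power)
    show "?S \<subseteq> ?F ?S"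
    proof
      fix z :: complex assume z: "z \<in> ?S"
      have cs: "csqrt z \<in> ?S" using z by (simp add: norm_csqrt)
      have "z \<in> (\<lambda>z. z^2) ` ?S" by (rule image_eqI[OF _ cs]) simp
      moreover have h: "(\<lambda>z::complex. z^2) \<in> {(\<lambda>z::complex. z ^ 2), (\<lambda>z. c * z ^ 2)}" by simp
      ultimately show "z \<in> ?F ?S" unfolding ifs_image_def using UN_I[OF h] by metis
    qed
  qed
  have P2: "(\<lambda>n. hausdorff_dist ((?F ^^ n) K) ?S) \<longlonglongrightarrow> 0"
    if K: "K \<noteq> {}" "K \<subseteq> ?S" for K
  proof (unfold lim_sequentially, intro allI impI)
    fix e :: real assume e: "e > 0"
    then have "e/2 > 0" by simp
    from finite_dense[OF irr this] obtain N where
      N: "\<forall>b\<in>?S. \<exists>m<N. dist b (c ^ m) < e/2" unfolding c_def by blast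
    obtain z0 where z0: "z0 \<in> K" using K by blast
    show "\<exists>no. \<forall>n\<ge>no. dist (hausdorff_dist ((?F ^^ n) K) ?S) 0 < e"
    proof (intro exI allI impI)
      fix n assume n: "N \<le> n"
      let ?A = "(?F ^^ n) K"
      have IP: "?A \<subseteq> ?S" "\<forall>z\<in>K. \<forall>m<2^n. z ^ (2^n) * c ^ m \<in> ?A"
        using iter_props[OF cn K(2), of n] by auto
      have Nn: "N < 2^n" using n less_exp[of n] by linarith
      have Ane: "?A \<noteq> {}" using IP(2) z0 by fastforce
      have s1: "(SUP a\<in>?A. infdist a ?S) = 0"
      proof -
        have "(SUP a\<in>?A. infdist a ?S) = (SUP a\<in>?A. (0::real))"
          using IP(1) by (intro SUP_cong) (auto simp: infdist_zero)
        also have "\<dots> = 0" using Ane by simp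
        finally show ?thesis .
      qed
      have s2: "(SUP b\<in>?S. infdist b ?A) \<le> e/2"
      proof (rule cSUP_least)
        show "?S \<noteq> {}" using mem_sphere_0[of "1::complex" 1] by auto
      next
        fix b :: complex assume b: "b \<in> ?S"
        let ?v = "z0 ^ (2^n)"
        have vn: "norm ?v = 1" using z0 K(2) by (auto simp: norm_power)
        have "b / ?v \<in> ?S" using b vn by (simp add: norm_divide)
        with N obtain m where m: "m < N" "dist (b / ?v) (c ^ m) < e/2" by blast
        have mem: "?v * c ^ m \<in> ?A" using IP(2) z0 m(1) Nn by auto
        have "dist b (?v * c ^ m) = norm ?v * dist (b / ?v) (c ^ m)"
        proof -
          have vnz: "?v \<noteq> 0" using vn by (metis norm_zero zero_neq_one)
          have "b - ?v * c ^ m = ?v * (b / ?v - c ^ m)" using vnz by (simp add: right_diff_distrib)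
          then show ?thesis by (simp add: dist_norm norm_mult)
        qed
        with vn m(2) have "dist b (?v * c ^ m) < e/2" by simp
        moreover have "infdist b ?A \<le> dist b (?v * c ^ m)" by (rule infdist_le[OF mem])
        ultimately show "infdist b ?A \<le> e/2" by simp
      qed
      have hd: "hausdorff_dist ?A ?S = max 0 (SUP b\<in>?S. infdist b ?A)"
        unfolding hausdorff_dist_def s1 ..
      show "dist (hausdorff_dist ?A ?S) 0 < e"
        using s2 e unfolding hd by (simp add: dist_real_def)
    qed
  qed
  have P3: "lip_const ?S d (\<lambda>z. z^2) > 1 \<and> lip_const ?S d (\<lambda>z. c * z^2) > 1"
    if "Metric_space ?S d \<and> Metric_space.mtopology ?S d = top_of_set ?S" for d
  proof
    have n1: "norm (1::complex) = 1" by simp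
    from lip_gt[OF n1, of d] that show "lip_const ?S d (\<lambda>z. z^2) > 1" by simp
    from lip_gt[OF cn, of d] that show "lip_const ?S d (\<lambda>z. c * z^2) > 1" by simp
  qed
  have P2': "\<forall>K. K \<noteq> {} \<and> compact K \<and> K \<subseteq> ?S \<longrightarrow>
          (\<lambda>n. hausdorff_dist ((?F ^^ n) K) ?S) \<longlonglongrightarrow> 0"
    using P2 by blast
  have P3': "\<forall>d. Metric_space ?S d \<and> Metric_space.mtopology ?S d = top_of_set ?S
          \<longrightarrow> lip_const ?S d (\<lambda>z. z^2) > 1 \<and> lip_const ?S d (\<lambda>z. c * z^2) > 1"
    using P3 by blast
  show ?thesis
    unfolding fg using P1 P2' P3' by (intro conjI)
qed

end
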